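(* Let $\Pi$ be a convex self-polar pentagon on the unit sphere $S^2\subset\mathbb{R}^3$. Its diagonals bound a smaller pentagon inside $\Pi$; let $P$ be a point inside this smaller pentagon, and let $\rho$ be the central projection (from the center of the sphere) of the relevant open hemisphere onto the plane tangent to $S^2$ at $P$. Then the image $\rho(\Pi)$ is a planar pentagon whose five altitudes (for each vertex, the line through that vertex perpendicular to the opposite side) are concurrent, and they all pass through $P$.
   Context: A spherical pentagon with sides on great circles is self-polar if each vertex is the pole of the great circle containing the opposite side, i.e. each vertex (as a unit vector in $\mathbb{R}^3$) is orthogonal to the plane of the opposite side. Central projection maps a point $v$ of the open hemisphere centered at $P$ to the intersection of the line $\mathbb{R}v$ with the tangent plane $\{x: \langle x,P\rangle=1\}$; it maps great circles to straight lines. *)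

theory Defs
  imports "HOL-Analysis.Analysis" "HOL-Analysis.Cross3"
begin

text \<open>A spherical pentagon is given by its vertices v 0, ..., v 4 (indices taken mod 5),
  as vectors in real^3.\<close>

definition sdet :: "real^3 \<Rightarrow> real^3 \<Rightarrow> real^3 \<Rightarrow> real" where
  "sdet a b c = cross3 a b \<bullet> c"

definition convex_sph_pentagon :: "(nat \<Rightarrow> real^3) \<Rightarrow> bool" where
  "convex_sph_pentagon v \<longleftrightarrow>
     (\<forall>i<5. norm (v i) = 1) \<and>
     (\<exists>u. \<forall>i<5. u \<bullet> v i > 0) \<and>
     (\<exists>s\<in>{1, -1::real}. \<forall>i<5. \<forall>j<5. j \<noteq> i \<and> j \<noteq> (i+1) mod 5 \<longrightarrow>
          s * sdet (v i) (v ((i+1) mod 5)) (v j) > 0)"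

text \<open>Self-polar: each vertex is orthogonal to the plane of the opposite side, i.e. to both
  endpoints v (i+2), v (i+3) of that side.\<close>
definition self_polar_pentagon :: "(nat \<Rightarrow> real^3) \<Rightarrow> bool" where
  "self_polar_pentagon v \<longleftrightarrow>
     (\<forall>i<5. v i \<bullet> v ((i+2) mod 5) = 0 \<and> v i \<bullet> v ((i+3) mod 5) = 0)"

text \<open>P (a point of the sphere) lies in the interior of the inner pentagon bounded by the
  diagonals: for each diagonal v i v (i+2), P lies strictly on the same side of its great
  circle as the other vertices (e.g. v (i+3)), i.e. not on the side of the cut-off vertex.\<close>
definition in_inner_pentagon :: "(nat \<Rightarrow> real^3) \<Rightarrow> real^3 \<Rightarrow> bool" where
  "in_inner_pentagon v P \<longleftrightarrow> norm P = 1 \<and>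
     (\<forall>i<5. sdet (v i) (v ((i+2) mod 5)) P * sdet (v i) (v ((i+2) mod 5)) (v ((i+3) mod 5)) > 0)"

definition cproj :: "real^3 \<Rightarrow> real^3 \<Rightarrow> real^3" where
  "cproj P x = (1 / (x \<bullet> P)) *\<^sub>R x"

end

theory Submission
  imports Defs
begin

lemma triple_exp: "cross3 a (cross3 b c) = (a \<bullet> c) *\<^sub>R b - (a \<bullet> b) *\<^sub>R c"
  for a b c :: "real^3"
  by (simp add: cross3_simps forall_3)

lemma sdet_cyc: "sdet a b c = sdet b c a"
  by (simp add: sdet_def cross3_simps)

lemma sdet_rep: "sdet a b a = 0" "sdet a b b = 0"
  by (simp_all add: sdet_def cross3_simps)

lemma par_lemma:
  fixes a b c :: "real^3"
  assumes "norm c = 1" "c \<bullet> a = 0" "c \<bullet> b = 0"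
  shows "cross3 a b = (cross3 a b \<bullet> c) *\<^sub>R c"
proof -
  define x where "x = cross3 a b"
  have cc: "c \<bullet> c = 1" using assms(1) by (simp add: dot_square_norm)
  have "cross3 c x = 0" unfolding x_def triple_exp using assms by simp
  hence "cross3 c (cross3 c x) = 0" by simp
  hence "(c \<bullet> x) *\<^sub>R c - x = 0" unfolding triple_exp using cc by simp
  thus ?thesis unfolding x_def by (simp add: inner_commute)
qed

lemma key_ident:
  fixes p q u P :: "real^3"
  assumes "norm p = 1" "u \<bullet> p = 0" "u \<bullet> q = 0"
  shows "sdet u q p * (p \<bullet> P) = (p \<bullet> q) * sdet p u P + sdet u q P"
proof -
  define y where "y = q - (p \<bullet> q) *\<^sub>R p"
  have pp: "p \<bullet> p = 1" using assms(1) by (simp add: dot_square_norm)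
  have py: "p \<bullet> y = 0" unfolding y_def using pp by (simp add: inner_diff_right)
  have pu: "p \<bullet> u = 0" using assms(2) by (simp add: inner_commute)
  have e: "cross3 u y = (cross3 u y \<bullet> p) *\<^sub>R p"
    by (rule par_lemma[OF assms(1) pu py])
  have e2: "cross3 u y = cross3 u q - (p \<bullet> q) *\<^sub>R cross3 u p"
    unfolding y_def by (simp add: Cross3.right_diff_distrib cross_mult_right)
  have e3: "cross3 u y \<bullet> p = sdet u q p"
    unfolding e2 sdet_def by (simp add: inner_diff_left dot_cross_self)
  have "cross3 u y \<bullet> P = sdet u q p * (p \<bullet> P)" using e e3 by (metis inner_scaleR_left)
  moreover have "cross3 u y \<bullet> P = sdet u q P - (p \<bullet> q) * sdet u p P"
    unfolding e2 sdet_def by (simp add: inner_diff_left)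
  moreover have "sdet u p P = - sdet p u P" unfolding sdet_def
    by (metis cross_skew inner_minus_left)
  ultimately show ?thesis by simp
qed

lemma adj_pos:
  fixes a b c d :: "real^3" and s :: real
  assumes "norm c = 1" "c \<bullet> a = 0" "c \<bullet> b = 0"
    "s * sdet a b c > 0" "s * sdet a b d > 0"
  shows "c \<bullet> d > 0"
proof -
  have e: "cross3 a b = (cross3 a b \<bullet> c) *\<^sub>R c" by (rule par_lemma[OF assms(1-3)])
  have "sdet a b d = sdet a b c * (c \<bullet> d)" unfolding sdet_def
    by (subst e) (simp)
  hence "(s * sdet a b c) * (c \<bullet> d) > 0" using assms(5) by (simp add: mult.assoc)
  with assms(4) show ?thesis by (meson less_asym zero_less_mult_iff)
qed

lemma core:
  fixes a b c d e P :: "real^3" and s :: real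
  assumes "norm a = 1" "norm e = 1" "e \<bullet> b = 0" "e \<bullet> c = 0" "c \<bullet> a = 0"
    "s * sdet b c e > 0" "s * sdet b c a > 0"
    "sdet a c P * sdet a c d > 0" "sdet c e P * sdet c e a > 0"
    "s * sdet c d a > 0" "s * sdet e a c > 0"
  shows "a \<bullet> P > 0"
proof -
  have ae: "e \<bullet> a > 0" by (rule adj_pos[OF assms(2-4) assms(6,7)])
  have ce: "c \<bullet> e = 0" using assms(4) by (simp add: inner_commute)
  have K: "sdet c e a * (a \<bullet> P) = (a \<bullet> e) * sdet a c P + sdet c e P"
    by (rule key_ident[OF assms(1) assms(5) ce])
  have s1: "s * sdet a c d > 0" using assms(10) sdet_cyc by metis
  have s2: "s * sdet c e a > 0" using assms(11) sdet_cyc by metis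
  have t1: "s * sdet a c P > 0"
  proof -
    have "(s * sdet a c d) * (s * sdet a c P) > 0" using assms(8) s1
      by (smt (verit) mult.commute mult.left_commute mult_pos_pos zero_less_mult_iff)
    thus ?thesis using s1 by (meson less_asym zero_less_mult_iff)
  qed
  have t2: "s * sdet c e P > 0"
  proof -
    have "(s * sdet c e a) * (s * sdet c e P) > 0" using assms(9) s2
      by (smt (verit) mult.commute mult.left_commute mult_pos_pos zero_less_mult_iff)
    thus ?thesis using s2 by (meson less_asym zero_less_mult_iff)
  qed
  have "(s * sdet c e a) * (a \<bullet> P) = (a \<bullet> e) * (s * sdet a c P) + s * sdet c e P"
    using K by (metis (no_types, lifting) distrib_left mult.assoc mult.left_commute)
  also have "\<dots> > 0" using ae t1 t2 by (simp add: inner_commute add_pos_pos)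
  finally show ?thesis using s2 by (meson less_asym zero_less_mult_iff)
qed

lemma all5: "(\<forall>i<(5::nat). P i) = (P 0 \<and> P 1 \<and> P 2 \<and> P 3 \<and> P 4)"
  by (auto simp: eval_nat_numeral less_Suc_eq)

lemma sdet_ne: "sdet x y z \<noteq> 0 \<Longrightarrow> x \<noteq> y \<and> y \<noteq> z \<and> x \<noteq> z"
  by (auto simp: sdet_def dot_cross_self)

lemma alt:
  fixes a c d P :: "real^3"
  assumes "c \<bullet> P > 0" "d \<bullet> P > 0" "a \<bullet> c = 0" "a \<bullet> d = 0"
  shows "(P - cproj P a) \<bullet> (cproj P d - cproj P c) = 0"
  using assms unfolding cproj_def
  by (simp add: inner_diff_left inner_diff_right inner_commute)

lemma cproj_inj:
  fixes a b P :: "real^3"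
  assumes "a \<bullet> P > 0" "b \<bullet> P > 0" "norm a = 1" "norm b = 1" "cproj P a = cproj P b"
  shows "a = b"
proof -
  have "norm (cproj P a) = 1 / (a \<bullet> P)" "norm (cproj P b) = 1 / (b \<bullet> P)"
    using assms(1-4) unfolding cproj_def by simp_all
  hence "a \<bullet> P = b \<bullet> P" using assms(5) by simp
  thus ?thesis using assms(5) assms(1) unfolding cproj_def by simp
qed

theorem mainTheorem2:
  fixes v :: "nat \<Rightarrow> real^3" and P :: "real^3"
  assumes "convex_sph_pentagon v"
    and "self_polar_pentagon v"
    and "in_inner_pentagon v P"
  shows "(\<forall>i<5. v i \<bullet> P > 0) \<and>
         (\<forall>i<5. \<forall>j<5. i \<noteq> j \<longrightarrow> cproj P (v i) \<noteq> cproj P (v j)) \<and>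
         (\<forall>i<5. (P - cproj P (v i)) \<bullet>
                  (cproj P (v ((i+3) mod 5)) - cproj P (v ((i+2) mod 5))) = 0)"
proof -
  obtain s where N: "\<forall>i<5. norm (v i) = 1"
    and C: "\<forall>i<5. \<forall>j<5. j \<noteq> i \<and> j \<noteq> (i+1) mod 5 \<longrightarrow> s * sdet (v i) (v ((i+1) mod 5)) (v j) > 0"
    using assms(1) unfolding convex_sph_pentagon_def by blast
  have S: "\<forall>i<5. v i \<bullet> v ((i+2) mod 5) = 0 \<and> v i \<bullet> v ((i+3) mod 5) = 0"
    using assms(2) unfolding self_polar_pentagon_def by blast
  have I: "\<forall>i<5. sdet (v i) (v ((i+2) mod 5)) P * sdet (v i) (v ((i+2) mod 5)) (v ((i+3) mod 5)) > 0"
    using assms(3) unfolding in_inner_pentagon_def by blast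
  note N' = N[unfolded all5, simplified]
  note C' = C[unfolded all5, simplified]
  note S' = S[unfolded all5, simplified]
  note I' = I[unfolded all5, simplified]
  have SS: "v i \<bullet> v j = 0 \<longleftrightarrow> v j \<bullet> v i = 0" for i j by (simp add: inner_commute)
  have pos: "\<forall>i<5. v i \<bullet> P > 0"
    unfolding all5
    apply (intro conjI)
        apply (rule core[where a="v 0" and b="v 1" and c="v 2" and d="v 3" and e="v 4" and P=P and s=s]; use N' C' S' I' in \<open>simp add: inner_commute numeral_eq_Suc\<close>)
       apply (rule core[where a="v 1" and b="v 2" and c="v 3" and d="v 4" and e="v 0" and P=P and s=s]; use N' C' S' I' in \<open>simp add: inner_commute numeral_eq_Suc\<close>)
      apply (rule core[where a="v 2" and b="v 3" and c="v 4" and d="v 0" and e="v 1" and P=P and s=s]; use N' C' S' I' in \<open>simp add: inner_commute numeral_eq_Suc\<close>)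
     apply (rule core[where a="v 3" and b="v 4" and c="v 0" and d="v 1" and e="v 2" and P=P and s=s]; use N' C' S' I' in \<open>simp add: inner_commute numeral_eq_Suc\<close>)
    apply (rule core[where a="v 4" and b="v 0" and c="v 1" and d="v 2" and e="v 3" and P=P and s=s]; use N' C' S' I' in \<open>simp add: inner_commute numeral_eq_Suc\<close>)
    done
  have dist: "\<forall>i<5. \<forall>j<5. i \<noteq> j \<longrightarrow> v i \<noteq> v j"
  proof -
    have "sdet (v i) (v ((i+1) mod 5)) (v ((i+2) mod 5)) \<noteq> 0" if "i < 5" for i
    proof -
      have h: "(i+2) mod 5 < 5" "(i+2) mod 5 \<noteq> i" "(i+2) mod 5 \<noteq> (i+1) mod 5"
        using that by presburger+
      have "s * sdet (v i) (v ((i+1) mod 5)) (v ((i+2) mod 5)) > 0" using C that h by blast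
      thus ?thesis by auto
    qed
    hence D: "\<forall>i<5. sdet (v i) (v ((i+1) mod 5)) (v ((i+2) mod 5)) \<noteq> 0" by blast
    note D' = D[unfolded all5, simplified]
    have E: "v 0 \<noteq> v 1 \<and> v 1 \<noteq> v 2 \<and> v 0 \<noteq> v 2 \<and> v 1 \<noteq> v 3 \<and> v 2 \<noteq> v 3 \<and> v 2 \<noteq> v 4
       \<and> v 3 \<noteq> v 4 \<and> v 3 \<noteq> v 0 \<and> v 4 \<noteq> v 0 \<and> v 4 \<noteq> v 1"
      using D' by (auto simp: numeral_eq_Suc sdet_def dot_cross_self)
    show ?thesis unfolding all5 using E by auto
  qed
  show ?thesis
  proof (intro conjI)
    show "\<forall>i<5. v i \<bullet> P > 0" by (rule pos)
    show "\<forall>i<5. \<forall>j<5. i \<noteq> j \<longrightarrow> cproj P (v i) \<noteq> cproj P (v j)"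
      using pos dist N cproj_inj by metis
    show "\<forall>i<5. (P - cproj P (v i)) \<bullet>
                  (cproj P (v ((i+3) mod 5)) - cproj P (v ((i+2) mod 5))) = 0"
    proof (intro allI impI)
      fix i :: nat assume i: "i < 5"
      show "(P - cproj P (v i)) \<bullet> (cproj P (v ((i+3) mod 5)) - cproj P (v ((i+2) mod 5))) = 0"
        by (rule alt) (use pos S i in auto)
    qed
  qed
qed

end
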